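(* Let $N=(S,T,F,M_0,\ell)$ be a plain structural conflict net. If $N$ has a fully reachable pure $\mathsf M$, then there are $\sigma\in\mathrm{Act}^*$ and $a,b,c\in\mathrm{Act}$ with $a\ne c$ such that $\langle\sigma,\{\{a,c\}\}\rangle\notin\mathcal F(N)$, $\langle\sigma,\{\{b\}\}\rangle\notin\mathcal F(N)$ and $\langle\sigma,\{\{a,b\},\{b,c\}\}\rangle\in\mathcal F(N)$.
   Context: Fix visible actions $\mathrm{Act}$ and $\tau\notin\mathrm{Act}$. A Petri net has disjoint $S,T$, $F:(S\times T)\cup(T\times S)\to\mathbb N$, $M_0\in\mathbb N^S$, $\ell:T\to\mathrm{Act}\cup\{\tau\}$. ${}^\bullet x(y)=F(y,x)$, $x^\bullet(y)=F(x,y)$, extended additively; multiset $\le,\cap,\cup$ pointwise $\le$, min, max. For finite nonempty multiset $G$ of transitions, $M[G\rangle M'$ iff ${}^\bullet G\le M$ and $M'=M-{}^\bullet G+G^\bullet$; reachable markings as usual; $t\smile u$ iff $M[\{t\}+\{u\}\rangle$ for some reachable $M$. Structural conflict net: $t\smile u\Rightarrow{}^\bullet t\cap{}^\bullet u=\emptyset$. Plain: $\ell$ injective and never $\tau$. Fully reachable pure $\mathsf M$: $t,u,v\in T$ with ${}^\bullet t\cap{}^\bullet u\ne\emptyset$, ${}^\bullet u\cap{}^\bullet v\ne\emptyset$, ${}^\bullet t\cap{}^\bullet v=\emptyset$ and a reachable $M$ with ${}^\bullet t\cup{}^\bullet u\cup{}^\bullet v\le M$. $M\xrightarrow{\alpha}M'$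 iff $M[t\rangle M'$ with $\ell(t)=\alpha$; $\Rightarrow$ reflexive transitive closure of $\xrightarrow{\tau}$; $M\overset{a_1\cdots a_n}{\Longrightarrow}M'$ iff $M\Rightarrow\xrightarrow{a_1}\Rightarrow\cdots\xrightarrow{a_n}\Rightarrow M'$. For a step $A$ (finite nonempty multiset over $\mathrm{Act}$), $M\xrightarrow{A}$ iff $M[G\rangle$ for a finite multiset $G$ of transitions, none labelled $\tau$, with label multiset $A$. $\mathcal F(N)$, the set of step failure pairs, consists of all $\langle\sigma,X\rangle$ with $\sigma\in\mathrm{Act}^*$ and $X$ a finite set of steps such that some $M$ has $M_0\overset{\sigma}{\Longrightarrow}M$, $M\not\xrightarrow{\tau}$ and $M\not\xrightarrow{A}$ for all $A\in X$. *)

theory Defs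
  imports Main "HOL-Library.Multiset"
begin

text \<open>A Petri net with places of type 's, transitions of type 't and visible
actions of type 'a.  The flow relation is split into
  Fst :: 's => 't => nat  (F(s,t)) and Fts :: 't => 's => nat (F(t,s)).
Labels are 'a option, where None plays the role of the invisible action tau.\<close>

type_synonym 's marking = "'s \<Rightarrow> nat"

definition preT :: "('s \<Rightarrow> 't \<Rightarrow> nat) \<Rightarrow> 't \<Rightarrow> 's marking" where
  "preT Fst t = (\<lambda>s. Fst s t)"

definition preG :: "('s \<Rightarrow> 't \<Rightarrow> nat) \<Rightarrow> 't multiset \<Rightarrow> 's marking" where
  "preG Fst G = (\<lambda>s. \<Sum>t\<in>#G. Fst s t)"

definition postG :: "('t \<Rightarrow> 's \<Rightarrow> nat) \<Rightarrow> 't multiset \<Rightarrow> 's marking" where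
  "postG Fts G = (\<lambda>s. \<Sum>t\<in>#G. Fts t s)"

definition fires ::
  "('s \<Rightarrow> 't \<Rightarrow> nat) \<Rightarrow> ('t \<Rightarrow> 's \<Rightarrow> nat) \<Rightarrow> 's marking \<Rightarrow> 't multiset \<Rightarrow> 's marking \<Rightarrow> bool" where
  "fires Fst Fts M G M' \<longleftrightarrow> G \<noteq> {#} \<and> preG Fst G \<le> M \<and>
     M' = (\<lambda>s. M s - preG Fst G s + postG Fts G s)"

definition enabled ::
  "('s \<Rightarrow> 't \<Rightarrow> nat) \<Rightarrow> ('t \<Rightarrow> 's \<Rightarrow> nat) \<Rightarrow> 's marking \<Rightarrow> 't multiset \<Rightarrow> bool" where
  "enabled Fst Fts M G \<longleftrightarrow> (\<exists>M'. fires Fst Fts M G M')"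

inductive reachable ::
  "('s \<Rightarrow> 't \<Rightarrow> nat) \<Rightarrow> ('t \<Rightarrow> 's \<Rightarrow> nat) \<Rightarrow> 's marking \<Rightarrow> 's marking \<Rightarrow> bool"
  for Fst Fts M0 where
  init: "reachable Fst Fts M0 M0"
| step: "reachable Fst Fts M0 M \<Longrightarrow> fires Fst Fts M {#t#} M' \<Longrightarrow> reachable Fst Fts M0 M'"

definition concurrent ::
  "('s \<Rightarrow> 't \<Rightarrow> nat) \<Rightarrow> ('t \<Rightarrow> 's \<Rightarrow> nat) \<Rightarrow> 's marking \<Rightarrow> 't \<Rightarrow> 't \<Rightarrow> bool" where
  "concurrent Fst Fts M0 t u \<longleftrightarrow>
     (\<exists>M. reachable Fst Fts M0 M \<and> enabled Fst Fts M ({#t#} + {#u#}))"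

definition structural_conflict_net ::
  "('s \<Rightarrow> 't \<Rightarrow> nat) \<Rightarrow> ('t \<Rightarrow> 's \<Rightarrow> nat) \<Rightarrow> 's marking \<Rightarrow> bool" where
  "structural_conflict_net Fst Fts M0 \<longleftrightarrow>
     (\<forall>t u. concurrent Fst Fts M0 t u \<longrightarrow> inf (preT Fst t) (preT Fst u) = (\<lambda>_. 0))"

definition plain :: "('t \<Rightarrow> 'a option) \<Rightarrow> bool" where
  "plain lab \<longleftrightarrow> inj lab \<and> (\<forall>t. lab t \<noteq> None)"

definition fully_reachable_pure_M ::
  "('s \<Rightarrow> 't \<Rightarrow> nat) \<Rightarrow> ('t \<Rightarrow> 's \<Rightarrow> nat) \<Rightarrow> 's marking \<Rightarrow> bool" where
  "fully_reachable_pure_M Fst Fts M0 \<longleftrightarrow>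
     (\<exists>t u v. inf (preT Fst t) (preT Fst u) \<noteq> (\<lambda>_. 0)
            \<and> inf (preT Fst u) (preT Fst v) \<noteq> (\<lambda>_. 0)
            \<and> inf (preT Fst t) (preT Fst v) = (\<lambda>_. 0)
            \<and> (\<exists>M. reachable Fst Fts M0 M \<and>
                   sup (preT Fst t) (sup (preT Fst u) (preT Fst v)) \<le> M))"

definition lstep ::
  "('s \<Rightarrow> 't \<Rightarrow> nat) \<Rightarrow> ('t \<Rightarrow> 's \<Rightarrow> nat) \<Rightarrow> ('t \<Rightarrow> 'a option) \<Rightarrow>
   's marking \<Rightarrow> 'a option \<Rightarrow> 's marking \<Rightarrow> bool" where
  "lstep Fst Fts lab M \<alpha> M' \<longleftrightarrow> (\<exists>t. fires Fst Fts M {#t#} M' \<and> lab t = \<alpha>)"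

fun weak_trace ::
  "('s \<Rightarrow> 't \<Rightarrow> nat) \<Rightarrow> ('t \<Rightarrow> 's \<Rightarrow> nat) \<Rightarrow> ('t \<Rightarrow> 'a option) \<Rightarrow>
   's marking \<Rightarrow> 'a list \<Rightarrow> 's marking \<Rightarrow> bool" where
  "weak_trace Fst Fts lab M [] M' \<longleftrightarrow>
     (\<lambda>X Y. lstep Fst Fts lab X None Y)\<^sup>*\<^sup>* M M'"
| "weak_trace Fst Fts lab M (a # \<sigma>) M' \<longleftrightarrow>
     (\<exists>M1 M2. (\<lambda>X Y. lstep Fst Fts lab X None Y)\<^sup>*\<^sup>* M M1 \<and>
              lstep Fst Fts lab M1 (Some a) M2 \<and> weak_trace Fst Fts lab M2 \<sigma> M')"

definition step_enabled ::
  "('s \<Rightarrow> 't \<Rightarrow> nat) \<Rightarrow> ('t \<Rightarrow> 's \<Rightarrow> nat) \<Rightarrow> ('t \<Rightarrow> 'a option) \<Rightarrow>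
   's marking \<Rightarrow> 'a multiset \<Rightarrow> bool" where
  "step_enabled Fst Fts lab M A \<longleftrightarrow>
     (\<exists>G. enabled Fst Fts M G \<and> (\<forall>t\<in>#G. lab t \<noteq> None) \<and>
          image_mset lab G = image_mset Some A)"

definition step_failures ::
  "('s \<Rightarrow> 't \<Rightarrow> nat) \<Rightarrow> ('t \<Rightarrow> 's \<Rightarrow> nat) \<Rightarrow> 's marking \<Rightarrow> ('t \<Rightarrow> 'a option) \<Rightarrow>
   ('a list \<times> 'a multiset set) set" where
  "step_failures Fst Fts M0 lab =
     {(\<sigma>, X). finite X \<and> (\<forall>A\<in>X. A \<noteq> {#}) \<and>
        (\<exists>M. weak_trace Fst Fts lab M0 \<sigma> M \<and>
             \<not> (\<exists>M'. lstep Fst Fts lab M None M') \<and>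
             (\<forall>A\<in>X. \<not> step_enabled Fst Fts lab M A))}"

end

theory Submission
  imports Defs
begin

lemma no_tau: "plain lab \<Longrightarrow> \<not> lstep Fst Fts lab M None M'"
  by (auto simp: plain_def lstep_def)

lemma tau_star: "plain lab \<Longrightarrow> (\<lambda>X Y. lstep Fst Fts lab X None Y)\<^sup>*\<^sup>* M M1 \<Longrightarrow> M1 = M"
  by (erule converse_rtranclpE) (auto dest: no_tau)

lemma trace_snoc:
  "weak_trace Fst Fts lab M \<sigma> M1 \<Longrightarrow> lstep Fst Fts lab M1 (Some a) M2
   \<Longrightarrow> weak_trace Fst Fts lab M (\<sigma>@[a]) M2"
proof (induction \<sigma> arbitrary: M)
  case Nil
  then show ?case by auto
next
  case (Cons x \<sigma>)
  then show ?case by auto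
qed

lemma reach_trace:
  assumes "reachable Fst Fts M0 M" "plain lab"
  shows "\<exists>\<sigma>. weak_trace Fst Fts lab M0 \<sigma> M"
  using assms(1)
proof induction
  case init
  have "weak_trace Fst Fts lab M0 [] M0" by simp
  then show ?case by blast
next
  case (step M t M')
  then obtain \<sigma> where s: "weak_trace Fst Fts lab M0 \<sigma> M" by blast
  obtain a where "lab t = Some a" using assms(2) unfolding plain_def by blast
  then have "lstep Fst Fts lab M (Some a) M'" using step by (auto simp: lstep_def)
  then show ?case using trace_snoc[OF s] by blast
qed

lemma lstep_det:
  "plain lab \<Longrightarrow> lstep Fst Fts lab M (Some a) X \<Longrightarrow> lstep Fst Fts lab M (Some a) Y \<Longrightarrow> X = Y"
  unfolding lstep_def plain_def fires_def
  by (metis injD)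

lemma trace_det:
  "plain lab \<Longrightarrow> weak_trace Fst Fts lab M \<sigma> M1 \<Longrightarrow> weak_trace Fst Fts lab M \<sigma> M2 \<Longrightarrow> M1 = M2"
proof (induction \<sigma> arbitrary: M)
  case Nil
  then show ?case using tau_star by (metis weak_trace.simps(1))
next
  case (Cons x \<sigma>)
  from Cons.prems(2) obtain A1 B1 where a: "(\<lambda>X Y. lstep Fst Fts lab X None Y)\<^sup>*\<^sup>* M A1"
    "lstep Fst Fts lab A1 (Some x) B1" "weak_trace Fst Fts lab B1 \<sigma> M1" by auto
  from Cons.prems(3) obtain A2 B2 where b: "(\<lambda>X Y. lstep Fst Fts lab X None Y)\<^sup>*\<^sup>* M A2"
    "lstep Fst Fts lab A2 (Some x) B2" "weak_trace Fst Fts lab B2 \<sigma> M2" by auto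
  have "A1 = M" "A2 = M" using a(1) b(1) tau_star Cons.prems(1) by metis+
  then have "B1 = B2" using a(2) b(2) lstep_det Cons.prems(1) by metis
  then show ?case using Cons.IH Cons.prems(1) a(3) b(3) by blast
qed

lemma image_mset_inj: "inj f \<Longrightarrow> image_mset f A = image_mset f B \<Longrightarrow> A = B"
  by (metis multiset.map_comp inv_o_cancel multiset.map_id)

lemma inf0: "inf (preT Fst t) (preT Fst v) = (\<lambda>_. 0) \<Longrightarrow> min (Fst s t) (Fst s v) = 0"
  by (auto simp: preT_def fun_eq_iff inf_fun_def inf_nat_def dest: spec[of _ s])

theorem lemma5p4:
  fixes Fst :: "'s \<Rightarrow> 't \<Rightarrow> nat" and Fts :: "'t \<Rightarrow> 's \<Rightarrow> nat"
    and M0 :: "'s \<Rightarrow> nat" and lab :: "'t \<Rightarrow> 'a option"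
  assumes "plain lab"
    and "structural_conflict_net Fst Fts M0"
    and "fully_reachable_pure_M Fst Fts M0"
  shows "\<exists>\<sigma> a b c. a \<noteq> c
     \<and> (\<sigma>, {{#a, c#}}) \<notin> step_failures Fst Fts M0 lab
     \<and> (\<sigma>, {{#b#}}) \<notin> step_failures Fst Fts M0 lab
     \<and> (\<sigma>, {{#a, b#}, {#b, c#}}) \<in> step_failures Fst Fts M0 lab"
proof -
  obtain t u v M where tu: "inf (preT Fst t) (preT Fst u) \<noteq> (\<lambda>_. 0)"
    and uv: "inf (preT Fst u) (preT Fst v) \<noteq> (\<lambda>_. 0)"
    and tv: "inf (preT Fst t) (preT Fst v) = (\<lambda>_. 0)"
    and rM: "reachable Fst Fts M0 M"
    and le: "sup (preT Fst t) (sup (preT Fst u) (preT Fst v)) \<le> M"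
    using assms(3) unfolding fully_reachable_pure_M_def by blast
  have leS: "Fst s t \<le> M s" "Fst s u \<le> M s" "Fst s v \<le> M s" for s
    using le by (auto simp: preT_def le_fun_def sup_fun_def)
  have plain: "inj lab" "\<And>t. lab t \<noteq> None" using assms(1) by (auto simp: plain_def)
  define a where "a = the (lab t)"
  define b where "b = the (lab u)"
  define c where "c = the (lab v)"
  have la: "lab t = Some a" "lab u = Some b" "lab v = Some c"
    using plain(2) unfolding a_def b_def c_def by (metis option.collapse)+
  have "t \<noteq> v"
  proof
    assume "t = v"
    then have "preT Fst t = (\<lambda>_. 0)" using tv by simp
    then show False using tu by (simp add: inf_fun_def fun_eq_iff inf_nat_def)
  qed
  then have ac: "a \<noteq> c" using la plain(1) by (metis injD)
  obtain \<sigma> where tr: "weak_trace Fst Fts lab M0 \<sigma> M" using reach_trace[OF rM assms(1)] by blast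
  have uniq: "\<And>M'. weak_trace Fst Fts lab M0 \<sigma> M' \<Longrightarrow> M' = M"
    using trace_det[OF assms(1)] tr by blast
  have en_tv: "enabled Fst Fts M {#t, v#}"
  proof -
    have "preG Fst {#t, v#} \<le> M"
      unfolding le_fun_def preG_def
    proof
      fix s
      have "min (Fst s t) (Fst s v) = 0" using inf0[OF tv] .
      then show "(\<Sum>x\<in>#{#t, v#}. Fst s x) \<le> M s" using leS[of s] by auto
    qed
    then show ?thesis unfolding enabled_def fires_def by auto
  qed
  have se_ac: "step_enabled Fst Fts lab M {#a, c#}"
    unfolding step_enabled_def
    by (rule exI[of _ "{#t, v#}"]) (use en_tv la plain(2) in auto)
  have en_u: "enabled Fst Fts M {#u#}"
    unfolding enabled_def fires_def using leS by (auto simp: preG_def le_fun_def)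
  have se_b: "step_enabled Fst Fts lab M {#b#}"
    unfolding step_enabled_def
    by (rule exI[of _ "{#u#}"]) (use en_u la plain(2) in auto)
  have notab: "\<not> step_enabled Fst Fts lab M {#x, b#}"
    if lx: "lab w = Some x" and wu: "inf (preT Fst w) (preT Fst u) \<noteq> (\<lambda>_. 0)" for w x
  proof
    assume "step_enabled Fst Fts lab M {#x, b#}"
    then obtain G where G: "enabled Fst Fts M G" "image_mset lab G = image_mset Some {#x, b#}"
      unfolding step_enabled_def by blast
    have "image_mset lab G = image_mset lab {#w, u#}" using G(2) lx la by simp
    then have "G = {#w, u#}" using image_mset_inj[OF plain(1)] by blast
    then have "concurrent Fst Fts M0 w u" using G(1) rM unfolding concurrent_def by (auto simp: add_mset_commute)
    then show False using assms(2) wu unfolding structural_conflict_net_def by blast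
  qed
  have n1: "\<not> step_enabled Fst Fts lab M {#a, b#}" using notab[OF la(1) tu] .
  have n2: "\<not> step_enabled Fst Fts lab M {#b, c#}"
    using notab[OF la(3)] uv by (metis inf.commute add_mset_commute)
  have f1: "(\<sigma>, {{#a, c#}}) \<notin> step_failures Fst Fts M0 lab"
    unfolding step_failures_def using uniq se_ac by auto
  have f2: "(\<sigma>, {{#b#}}) \<notin> step_failures Fst Fts M0 lab"
    unfolding step_failures_def using uniq se_b by auto
  have f3: "(\<sigma>, {{#a, b#}, {#b, c#}}) \<in> step_failures Fst Fts M0 lab"
  proof -
    have "\<not> (\<exists>M'. lstep Fst Fts lab M None M')" using no_tau[OF assms(1)] by blast
    then show ?thesis unfolding step_failures_def using tr n1 n2 by auto
  qed
  show ?thesis using ac f1 f2 f3 by blast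
qed

end
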